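(* Let $p$ be a prime and $G=Z_{p^{\lambda_1}}\times\cdots\times Z_{p^{\lambda_n}}$ with $\lambda_1\le\cdots\le\lambda_n$. For $\mathbf a\in\Lambda(G)$, the subgroup $R(\mathbf a)$ is a characteristic subgroup of $G$ if and only if $\mathbf a$ is canonical.
   Context: Tuples are ordered componentwise. $\Lambda(G)=\{\mathbf a\in\mathbb Z^n:\mathbf 0\le\mathbf a\le(\lambda_1,\dots,\lambda_n)\}$. For $\mathbf a\in\Lambda(G)$, $T(\mathbf a)$ is the set of $(g_1,\dots,g_n)\in G$ with $|g_i|=p^{a_i}$ for all $i$, and $R(\mathbf a)=\bigcup_{\mathbf b\le\mathbf a}T(\mathbf b)$ (a subgroup of $G$). A tuple $\mathbf a$ is canonical if (I) $a_i\ge a_{i-1}$ for all $i\in\{2,\dots,n\}$ and (II) $a_{i+1}-a_i\le\lambda_{i+1}-\lambda_i$ for all $i\in\{1,\dots,n-1\}$. *)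

theory Defs
  imports "HOL-Algebra.Algebra" "HOL-Algebra.Multiplicative_Group"
begin

definition pgrp :: "nat \<Rightarrow> nat \<Rightarrow> (nat \<Rightarrow> nat) \<Rightarrow> (nat \<Rightarrow> int) monoid" where
  "pgrp p n lam = product_group {1..n} (\<lambda>i. integer_mod_group (p ^ lam i))"

definition Tset :: "nat \<Rightarrow> nat \<Rightarrow> (nat \<Rightarrow> nat) \<Rightarrow> (nat \<Rightarrow> nat) \<Rightarrow> (nat \<Rightarrow> int) set" where
  "Tset p n lam a = {g \<in> carrier (pgrp p n lam).
     \<forall>i\<in>{1..n}. group.ord (integer_mod_group (p ^ lam i)) (g i) = p ^ a i}"

definition Rset :: "nat \<Rightarrow> nat \<Rightarrow> (nat \<Rightarrow> nat) \<Rightarrow> (nat \<Rightarrow> nat) \<Rightarrow> (nat \<Rightarrow> int) set" where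
  "Rset p n lam a = (\<Union>b \<in> {b. \<forall>i\<in>{1..n}. b i \<le> a i}. Tset p n lam b)"

definition characteristic_subgroup :: "'a set \<Rightarrow> ('a, 'b) monoid_scheme \<Rightarrow> bool" where
  "characteristic_subgroup H G \<longleftrightarrow> subgroup H G \<and> (\<forall>\<phi> \<in> iso G G. \<phi> ` H = H)"

definition in_Lambda :: "nat \<Rightarrow> (nat \<Rightarrow> nat) \<Rightarrow> (nat \<Rightarrow> nat) \<Rightarrow> bool" where
  "in_Lambda n lam a \<longleftrightarrow> (\<forall>i\<in>{1..n}. a i \<le> lam i)"

definition canonical :: "nat \<Rightarrow> (nat \<Rightarrow> nat) \<Rightarrow> (nat \<Rightarrow> nat) \<Rightarrow> bool" where
  "canonical n lam a \<longleftrightarrow>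
     (\<forall>i\<in>{2..n}. a (i - 1) \<le> a i) \<and>
     (\<forall>i\<in>{1..<n}. int (a (i + 1)) - int (a i) \<le> int (lam (i + 1)) - int (lam i))"

end

theory Submission
  imports Defs
begin

locale PG =
  fixes p n :: nat and lam :: "nat \<Rightarrow> nat"
  assumes prime: "Factorial_Ring.prime p"
begin

abbreviation "Z i \<equiv> integer_mod_group (p ^ lam i)"
abbreviation "G \<equiv> pgrp p n lam"
abbreviation "M i \<equiv> int p ^ lam i"

lemma p_pos: "0 < p" using prime prime_gt_0_nat by blast
lemma p_gt1: "1 < p" using prime prime_gt_1_nat by blast
lemma M_pos: "0 < M i" using p_pos by simp

lemma carrier_Z: "carrier (Z i) = {0..<M i}"
  using p_pos by (simp add: carrier_integer_mod_group)

lemma carrier_G: "carrier G = (\<Pi>\<^sub>E i\<in>{1..n}. {0..<M i})"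
  by (simp add: pgrp_def carrier_Z)

lemma mult_G: "x \<otimes>\<^bsub>G\<^esub> y = (\<lambda>i\<in>{1..n}. (x i + y i) mod M i)"
  by (simp add: pgrp_def)

lemma one_G: "\<one>\<^bsub>G\<^esub> = (\<lambda>i\<in>{1..n}. 0)"
  by (simp add: pgrp_def)

lemma group_G: "group G"
  by (simp add: pgrp_def)

lemma pow_G: "x [^]\<^bsub>G\<^esub> (k::nat) = (\<lambda>i\<in>{1..n}. (int k * x i) mod M i)"
proof (induction k)
  case 0 then show ?case by (simp add: one_G)
next
  case (Suc k)
  show ?case by (rule ext) (simp add: Suc mult_G mod_add_right_eq distrib_right add.commute)
qed

lemma ord_char:
  assumes x: "x \<in> carrier (Z i)" and a: "a' \<le> lam i"
  shows "(\<exists>b\<le>a'. group.ord (Z i) x = p ^ b) \<longleftrightarrow> int p ^ (lam i - a') dvd x"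
proof -
  interpret Zi: group "Z i" by simp
  have ord_eq: "order (Z i) = p ^ lam i"
    using p_pos by (simp add: order_def carrier_Z nat_power_eq)
  have "Zi.ord x dvd p ^ lam i" using Zi.ord_dvd_group_order[OF x] ord_eq by simp
  then obtain b0 where b0: "b0 \<le> lam i" "Zi.ord x = p ^ b0"
    using divides_primepow_nat[OF prime] by blast
  have "(\<exists>b\<le>a'. Zi.ord x = p ^ b) \<longleftrightarrow> Zi.ord x dvd p ^ a'"
    using divides_primepow_nat[OF prime] by blast
  also have "\<dots> \<longleftrightarrow> x [^]\<^bsub>Z i\<^esub> (p ^ a') = \<one>\<^bsub>Z i\<^esub>"
    using Zi.pow_eq_id[OF x] by blast
  also have "\<dots> \<longleftrightarrow> (int p ^ a' * x) mod M i = 0"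
    by simp
  also have "\<dots> \<longleftrightarrow> int p ^ a' * int p ^ (lam i - a') dvd int p ^ a' * x"
    by (simp add: mod_eq_0_iff_dvd flip: power_add, simp add: a)
  also have "\<dots> \<longleftrightarrow> int p ^ (lam i - a') dvd x"
    using p_pos by simp
  finally show ?thesis .
qed


definition HH :: "(nat \<Rightarrow> nat) \<Rightarrow> nat \<Rightarrow> int set" where
  "HH a i = {x\<in>{0..<M i}. int p ^ (lam i - a i) dvd x}"

lemma Rset_eq:
  assumes a: "\<forall>i\<in>{1..n}. a i \<le> lam i"
  shows "Rset p n lam a = (\<Pi>\<^sub>E i\<in>{1..n}. HH a i)"
proof
  show "Rset p n lam a \<subseteq> (\<Pi>\<^sub>E i\<in>{1..n}. HH a i)"
  proof
    fix g assume "g \<in> Rset p n lam a"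
    then obtain b where b: "\<forall>i\<in>{1..n}. b i \<le> a i" and g: "g \<in> carrier G"
      and o: "\<forall>i\<in>{1..n}. group.ord (Z i) (g i) = p ^ b i"
      unfolding Rset_def Tset_def by auto
    have gi: "g i \<in> carrier (Z i)" if "i \<in> {1..n}" for i
      using g that carrier_G carrier_Z by (auto simp: PiE_iff)
    show "g \<in> (\<Pi>\<^sub>E i\<in>{1..n}. HH a i)"
      using g unfolding carrier_G HH_def PiE_iff
      using ord_char[OF gi a[rule_format]] b o by (auto; metis atLeastAtMost_iff)
  qed
next
  show "(\<Pi>\<^sub>E i\<in>{1..n}. HH a i) \<subseteq> Rset p n lam a"
  proof
    fix g assume g: "g \<in> (\<Pi>\<^sub>E i\<in>{1..n}. HH a i)"
    then have gc: "g \<in> carrier G" unfolding carrier_G HH_def PiE_iff by auto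
    have gi: "g i \<in> carrier (Z i)" if "i \<in> {1..n}" for i
      using gc that carrier_G carrier_Z by (auto simp: PiE_iff)
    have "\<forall>i\<in>{1..n}. \<exists>b\<le>a i. group.ord (Z i) (g i) = p ^ b"
      using ord_char[OF gi a[rule_format]] g unfolding HH_def PiE_iff by auto
    then obtain f where f: "\<forall>i\<in>{1..n}. f i \<le> a i \<and> group.ord (Z i) (g i) = p ^ f i"
      by metis
    define b where "b i = (if i \<in> {1..n} then f i else 0)" for i
    show "g \<in> Rset p n lam a"
      unfolding Rset_def Tset_def using gc f
      by (auto simp: b_def intro!: exI[of _ b])
  qed
qed

lemma HH_subgroup:
  assumes "a i \<le> lam i"
  shows "subgroup (HH a i) (Z i)"
proof -
  interpret Zi: group "Z i" by simp
  have dM: "int p ^ (lam i - a i) dvd M i"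
    using assms by (simp add: le_imp_power_dvd)
  show ?thesis
  proof (rule Zi.subgroupI)
    show "HH a i \<subseteq> carrier (Z i)" by (auto simp: HH_def carrier_Z)
    show "HH a i \<noteq> {}" using M_pos[of i] by (auto simp: HH_def intro!: exI[of _ 0])
    show "inv\<^bsub>Z i\<^esub> x \<in> HH a i" if "x \<in> HH a i" for x
    proof -
      have "x \<in> carrier (Z i)" using that by (auto simp: HH_def carrier_Z)
      then show ?thesis using that dM M_pos[of i]
        by (auto simp: HH_def dvd_mod)
    qed
    show "x \<otimes>\<^bsub>Z i\<^esub> y \<in> HH a i" if "x \<in> HH a i" "y \<in> HH a i" for x y
      using that dM M_pos[of i] by (auto simp: HH_def dvd_mod)
  qed
qed

lemma R_subgroup:
  assumes "\<forall>i\<in>{1..n}. a i \<le> lam i"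
  shows "subgroup (\<Pi>\<^sub>E i\<in>{1..n}. HH a i) G"
  unfolding pgrp_def
  by (subst PiE_subgroup_product_group) (use assms HH_subgroup in auto)


lemma chain_mono:
  fixes f :: "nat \<Rightarrow> int"
  assumes "\<forall>i\<in>{1..<n}. f i \<le> f (i + 1)" "1 \<le> i" "i \<le> j" "j \<le> n"
  shows "f i \<le> f j"
  using assms(3,4)
proof (induction j)
  case 0 then show ?case by simp
next
  case (Suc j)
  show ?case
  proof (cases "i = Suc j")
    case False
    then have "i \<le> j" using Suc.prems by simp
    then have "f i \<le> f j" using Suc by simp
    moreover have "f j \<le> f (j + 1)" using assms(1) \<open>i \<le> j\<close> assms(2) Suc.prems by auto
    ultimately show ?thesis by simp
  qed simp
qed

definition e :: "nat \<Rightarrow> int \<Rightarrow> nat \<Rightarrow> int" where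
  "e j v = (\<lambda>i\<in>{1..n}. if i = j then v else 0)"

definition rs :: "nat set \<Rightarrow> (nat \<Rightarrow> int) \<Rightarrow> nat \<Rightarrow> int" where
  "rs J g = (\<lambda>i\<in>{1..n}. if i \<in> J then g i else 0)"

lemma e_carrier: "j \<in> {1..n} \<Longrightarrow> v \<in> {0..<M j} \<Longrightarrow> e j v \<in> carrier G"
  using M_pos by (auto simp: e_def carrier_G)

lemma key:
  assumes amon: "\<And>i j. 1 \<le> i \<Longrightarrow> i \<le> j \<Longrightarrow> j \<le> n \<Longrightarrow> a i \<le> a j"
    and cmon: "\<And>i j. 1 \<le> i \<Longrightarrow> i \<le> j \<Longrightarrow> j \<le> n \<Longrightarrow>
         int (lam i) - int (a i) \<le> int (lam j) - int (a j)"
    and lmon: "\<And>i j. 1 \<le> i \<Longrightarrow> i \<le> j \<Longrightarrow> j \<le> n \<Longrightarrow> lam i \<le> lam j"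
    and a: "\<forall>i\<in>{1..n}. a i \<le> lam i"
    and phi: "\<phi> \<in> hom G G"
    and j: "j \<in> {1..n}" and v: "v \<in> HH a j"
  shows "\<phi> (e j v) \<in> (\<Pi>\<^sub>E i\<in>{1..n}. HH a i)"
proof -
  interpret GG: group G by (rule group_G)
  define c where "c = lam j - a j"
  obtain w where w: "v = int p ^ c * w" using v by (auto simp: HH_def c_def elim!: dvdE)
  have pc: "0 < int p ^ c" using p_pos by simp
  have v0: "0 \<le> v" "v < M j" using v by (auto simp: HH_def)
  have w0: "0 \<le> w" using v0 w pc by (simp add: zero_le_mult_iff)
  have "w \<le> v" using w w0 pc
    by (metis mult_le_cancel_right1 linorder_not_less mult.commute not_one_le_zero
        zero_less_mult_pos2 int_one_le_iff_zero_less)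
  then have wc: "w \<in> {0..<M j}" using w0 v0 by auto
  have ewc: "e j w \<in> carrier G" using e_carrier[OF j wc] .
  have evc: "e j v \<in> carrier G" using e_carrier[OF j] v0 by auto
  have ev: "e j v = e j w [^]\<^bsub>G\<^esub> (p ^ c)"
    using v0 by (auto simp: pow_G e_def w)
  have "(a j + c) = lam j" using a j by (simp add: c_def)
  then have pw: "int p ^ a j * v = M j * w" by (simp add: w power_add[symmetric])
  have ev1: "e j v [^]\<^bsub>G\<^esub> (p ^ a j) = \<one>\<^bsub>G\<^esub>"
    by (rule ext) (auto simp: pow_G e_def one_G pw)
  define z where "z = \<phi> (e j w)"
  define y where "y = \<phi> (e j v)"
  have zc: "z \<in> carrier G" using phi ewc by (simp add: z_def hom_in_carrier)
  have yc: "y \<in> carrier G" using phi evc by (simp add: y_def hom_in_carrier)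
  have yz: "y = z [^]\<^bsub>G\<^esub> (p ^ c)"
    unfolding y_def z_def ev using hom_nat_pow[OF phi ewc group_G group_G] .
  have y1: "y [^]\<^bsub>G\<^esub> (p ^ a j) = \<one>\<^bsub>G\<^esub>"
    unfolding y_def using hom_nat_pow[OF phi evc group_G group_G, symmetric] ev1
      hom_one[OF phi group_G group_G] by simp
  show ?thesis
    unfolding y_def[symmetric] HH_def PiE_iff
  proof (intro conjI ballI)
    show "y \<in> extensional {1..n}" using yc by (simp add: carrier_G PiE_iff)
    fix i assume i: "i \<in> {1..n}"
    have yi: "y i = (int p ^ c * z i) mod M i"
      using fun_cong[OF yz, of i] i by (simp add: pow_G)
    have yi1: "(int p ^ a j * y i) mod M i = 0"
      using fun_cong[OF y1, of i] i by (simp add: pow_G one_G)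
    have yr: "y i \<in> {0..<M i}" using yc i by (auto simp: carrier_G PiE_iff)
    have "int p ^ (lam i - a i) dvd y i"
    proof (cases "i \<le> j")
      case True
      have "int (lam i) - int (a i) \<le> int (lam j) - int (a j)"
        using cmon[OF _ True] i j by auto
      then have le: "lam i - a i \<le> c" using a i j by (simp add: c_def)
      have d1: "int p ^ (lam i - a i) dvd int p ^ c * z i"
        using le by (simp add: le_imp_power_dvd)
      have d2: "int p ^ (lam i - a i) dvd M i" by (simp add: le_imp_power_dvd)
      show ?thesis unfolding yi using d1 d2 by (simp add: dvd_mod)
    next
      case False
      then have aji: "a j \<le> a i" using amon[of j i] i j by auto
      have "lam j \<le> lam i" using lmon[of j i] i j False by auto
      then have ajl: "a j \<le> lam i" using a j le_trans by blast
      have "int p ^ a j * int p ^ (lam i - a j) dvd int p ^ a j * y i"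
        using yi1 ajl by (simp add: mod_eq_0_iff_dvd flip: power_add)
      then have "int p ^ (lam i - a j) dvd y i" using p_pos by simp
      moreover have "int p ^ (lam i - a i) dvd int p ^ (lam i - a j)"
        using aji by (simp add: le_imp_power_dvd)
      ultimately show ?thesis by (rule dvd_trans[rotated])
    qed
    then show "y i \<in> {x \<in> {0..<M i}. int p ^ (lam i - a i) dvd x}" using yr by simp
  qed
qed


lemma preserve:
  assumes amon: "\<And>i j. 1 \<le> i \<Longrightarrow> i \<le> j \<Longrightarrow> j \<le> n \<Longrightarrow> a i \<le> a j"
    and cmon: "\<And>i j. 1 \<le> i \<Longrightarrow> i \<le> j \<Longrightarrow> j \<le> n \<Longrightarrow>
         int (lam i) - int (a i) \<le> int (lam j) - int (a j)"
    and lmon: "\<And>i j. 1 \<le> i \<Longrightarrow> i \<le> j \<Longrightarrow> j \<le> n \<Longrightarrow> lam i \<le> lam j"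
    and a: "\<forall>i\<in>{1..n}. a i \<le> lam i"
    and phi: "\<phi> \<in> hom G G"
    and g: "g \<in> (\<Pi>\<^sub>E i\<in>{1..n}. HH a i)"
  shows "\<phi> g \<in> (\<Pi>\<^sub>E i\<in>{1..n}. HH a i)"
proof -
  interpret GG: group G by (rule group_G)
  interpret R: subgroup "\<Pi>\<^sub>E i\<in>{1..n}. HH a i" G by (rule R_subgroup[OF a])
  have gc: "g \<in> carrier G" using g R.subset by auto
  have grange: "g i \<in> {0..<M i}" if "i \<in> {1..n}" for i
    using gc that by (auto simp: carrier_G PiE_iff)
  have rsc: "rs J g \<in> carrier G" for J
    using grange M_pos by (auto simp: rs_def carrier_G)
  have "\<phi> (rs J g) \<in> (\<Pi>\<^sub>E i\<in>{1..n}. HH a i)" if "J \<subseteq> {1..n}" for J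
  proof -
    have "finite J" using that finite_subset by blast
    then show ?thesis using that
    proof (induction J rule: finite_subset_induct)
      case empty
      have "rs {} g = \<one>\<^bsub>G\<^esub>" by (simp add: rs_def one_G)
      then show ?case using hom_one[OF phi group_G group_G] R.one_closed by simp
    next
      case (insert j J)
      have eq: "rs (insert j J) g = rs J g \<otimes>\<^bsub>G\<^esub> e j (g j)"
        using grange insert.hyps by (auto simp: rs_def e_def mult_G)
      have ec: "e j (g j) \<in> carrier G" using e_carrier insert.hyps grange by blast
      have "g j \<in> HH a j" using g insert.hyps by (auto simp: PiE_iff)
      then have "\<phi> (e j (g j)) \<in> (\<Pi>\<^sub>E i\<in>{1..n}. HH a i)"
        using key[OF amon cmon lmon a phi] insert.hyps by blast
      then show ?case
        unfolding eq hom_mult[OF phi rsc ec] using insert.IH R.m_closed by blast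
    qed
  qed
  moreover have "rs {1..n} g = g" using gc by (auto simp: rs_def carrier_G PiE_iff extensional_def)
  ultimately show ?thesis by (metis order_refl)
qed

lemma char_of_canon:
  assumes lm: "\<forall>i\<in>{2..n}. lam (i - 1) \<le> lam i"
    and a: "\<forall>i\<in>{1..n}. a i \<le> lam i"
    and can: "canonical n lam a"
  shows "characteristic_subgroup (\<Pi>\<^sub>E i\<in>{1..n}. HH a i) G"
proof -
  have amon: "a i \<le> a j" if "1 \<le> i" "i \<le> j" "j \<le> n" for i j
  proof -
    have "\<forall>i\<in>{1..<n}. int (a i) \<le> int (a (i + 1))"
    proof
      fix i assume "i \<in> {1..<n}"
      then have "i + 1 \<in> {2..n}" by auto
      then have "a (i + 1 - 1) \<le> a (i + 1)" using can unfolding canonical_def by blast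
      then show "int (a i) \<le> int (a (i + 1))" by simp
    qed
    from chain_mono[OF this that] show ?thesis by simp
  qed
  have lmon: "lam i \<le> lam j" if "1 \<le> i" "i \<le> j" "j \<le> n" for i j
  proof -
    have "\<forall>i\<in>{1..<n}. int (lam i) \<le> int (lam (i + 1))"
    proof
      fix i assume "i \<in> {1..<n}"
      then have "i + 1 \<in> {2..n}" by auto
      then have "lam (i + 1 - 1) \<le> lam (i + 1)" using lm by blast
      then show "int (lam i) \<le> int (lam (i + 1))" by simp
    qed
    from chain_mono[OF this that] show ?thesis by simp
  qed
  have cmon: "int (lam i) - int (a i) \<le> int (lam j) - int (a j)"
    if "1 \<le> i" "i \<le> j" "j \<le> n" for i j
  proof -
    have "\<forall>i\<in>{1..<n}. int (lam i) - int (a i) \<le> int (lam (i + 1)) - int (a (i + 1))"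
    proof
      fix i assume "i \<in> {1..<n}"
      then have "int (a (i + 1)) - int (a i) \<le> int (lam (i + 1)) - int (lam i)"
        using can unfolding canonical_def by blast
      then show "int (lam i) - int (a i) \<le> int (lam (i + 1)) - int (a (i + 1))" by simp
    qed
    from chain_mono[OF this that] show ?thesis by simp
  qed
  interpret R: subgroup "\<Pi>\<^sub>E i\<in>{1..n}. HH a i" G by (rule R_subgroup[OF a])
  have fin: "finite (\<Pi>\<^sub>E i\<in>{1..n}. HH a i)"
  proof (rule finite_PiE)
    fix i show "finite (HH a i)"
      by (rule finite_subset[of _ "{0..<M i}"]) (auto simp: HH_def)
  qed simp
  show ?thesis
    unfolding characteristic_subgroup_def
  proof (intro conjI ballI)
    show "subgroup (\<Pi>\<^sub>E i\<in>{1..n}. HH a i) G" by (rule R_subgroup[OF a])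
    fix \<phi> assume phi: "\<phi> \<in> iso G G"
    then have hom: "\<phi> \<in> hom G G" and inj: "inj_on \<phi> (carrier G)"
      by (auto simp: iso_def bij_betw_def)
    have sub: "\<phi> ` (\<Pi>\<^sub>E i\<in>{1..n}. HH a i) \<subseteq> (\<Pi>\<^sub>E i\<in>{1..n}. HH a i)"
      using preserve[OF amon cmon lmon a hom] by blast
    have "inj_on \<phi> (\<Pi>\<^sub>E i\<in>{1..n}. HH a i)" using inj R.subset inj_on_subset by blast
    then have "card (\<phi> ` (\<Pi>\<^sub>E i\<in>{1..n}. HH a i)) = card (\<Pi>\<^sub>E i\<in>{1..n}. HH a i)"
      by (rule card_image)
    then show "\<phi> ` (\<Pi>\<^sub>E i\<in>{1..n}. HH a i) = (\<Pi>\<^sub>E i\<in>{1..n}. HH a i)"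
      using card_subset_eq[OF fin sub] by blast
  qed
qed


definition tau :: "nat \<Rightarrow> nat \<Rightarrow> int \<Rightarrow> (nat \<Rightarrow> int) \<Rightarrow> nat \<Rightarrow> int" where
  "tau s t k g = (\<lambda>i\<in>{1..n}. if i = t then (g t + k * g s) mod M t else g i)"

lemma modk:
  fixes k u A B :: int
  assumes "B dvd k * A"
  shows "(k * (u mod A)) mod B = (k * u) mod B"
proof -
  have "k * u = k * (u mod A) + (k * A) * (u div A)"
    by (metis div_mult_mod_eq distrib_left mult.assoc mult.commute add.commute)
  moreover have "((k * A) * (u div A)) mod B = 0" using assms by simp
  ultimately show ?thesis by (metis add.right_neutral mod_add_right_eq)
qed

lemma tau_carrier:
  assumes "t \<in> {1..n}" "g \<in> carrier G"
  shows "tau s t k g \<in> carrier G"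
  using assms M_pos by (auto simp: tau_def carrier_G PiE_iff)

lemma tau_hom:
  assumes s: "s \<in> {1..n}" and t: "t \<in> {1..n}" and st: "s \<noteq> t" and k: "M t dvd k * M s"
  shows "tau s t k \<in> hom G G"
proof (rule homI)
  show "tau s t k x \<in> carrier G" if "x \<in> carrier G" for x using tau_carrier[OF t that] .
  fix x y assume x: "x \<in> carrier G" and y: "y \<in> carrier G"
  show "tau s t k (x \<otimes>\<^bsub>G\<^esub> y) = tau s t k x \<otimes>\<^bsub>G\<^esub> tau s t k y"
  proof (rule ext)
    fix i
    show "tau s t k (x \<otimes>\<^bsub>G\<^esub> y) i = (tau s t k x \<otimes>\<^bsub>G\<^esub> tau s t k y) i"
    proof (cases "i \<in> {1..n} \<and> i = t")
      case True
      have "((x t + y t) mod M t + k * ((x s + y s) mod M s)) mod M t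
          = ((x t + y t) + k * (x s + y s)) mod M t"
        using modk[OF k, of "x s + y s"] by (metis mod_add_left_eq mod_add_right_eq)
      also have "\<dots> = ((x t + k * x s) mod M t + (y t + k * y s) mod M t) mod M t"
        by (simp add: mod_add_eq algebra_simps)
      finally show ?thesis using True s t st by (simp add: tau_def mult_G)
    qed (auto simp: tau_def mult_G)
  qed
qed

lemma tau_inv:
  assumes s: "s \<in> {1..n}" and t: "t \<in> {1..n}" and st: "s \<noteq> t" and g: "g \<in> carrier G"
  shows "tau s t (- k) (tau s t k g) = g"
proof (rule ext)
  fix i
  have gt: "g t \<in> {0..<M t}" using g t by (auto simp: carrier_G PiE_iff)
  have "((g t + k * g s) mod M t + - k * g s) mod M t = g t"
  proof -
    have "((g t + k * g s) mod M t + - k * g s) mod M t = ((g t + k * g s) + - k * g s) mod M t"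
      by (rule mod_add_left_eq)
    also have "\<dots> = g t" using gt by simp
    finally show ?thesis .
  qed
  then show "tau s t (- k) (tau s t k g) i = g i"
    using s t st g by (auto simp: tau_def carrier_G PiE_iff extensional_def)
qed

lemma tau_iso:
  assumes s: "s \<in> {1..n}" and t: "t \<in> {1..n}" and st: "s \<noteq> t" and k: "M t dvd k * M s"
  shows "tau s t k \<in> iso G G"
proof -
  have k': "M t dvd (- k) * M s" using k by simp
  have "bij_betw (tau s t k) (carrier G) (carrier G)"
    apply (rule bij_betw_byWitness[where f' = "tau s t (-k)"])
    using tau_inv[OF s t st, of _ k] tau_inv[OF s t st, of _ "-k"] tau_carrier[OF t] by auto
  then show ?thesis using tau_hom[OF s t st k] by (simp add: iso_def)
qed


lemma pow_lt: "m < j \<Longrightarrow> int p ^ m < int p ^ j"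
  using p_gt1 by (simp add: power_strict_increasing_iff)

lemma pow_ndvd: "m < j \<Longrightarrow> \<not> int p ^ j dvd int p ^ m"
proof
  assume "m < j" "int p ^ j dvd int p ^ m"
  then have "int p ^ j \<le> int p ^ m" using p_pos by (intro zdvd_imp_le) auto
  then show False using pow_lt[OF \<open>m < j\<close>] by simp
qed

lemma witness:
  assumes s: "s \<in> {1..n}" and t: "t \<in> {1..n}" and st: "s \<noteq> t" and k: "M t dvd k * M s"
    and a: "\<forall>i\<in>{1..n}. a i \<le> lam i" and as: "1 \<le> a s"
    and val: "(k * int p ^ (lam s - a s)) mod M t = int p ^ m" and m: "m < lam t - a t"
  shows "\<not> characteristic_subgroup (\<Pi>\<^sub>E i\<in>{1..n}. HH a i) G"
proof
  assume ch: "characteristic_subgroup (\<Pi>\<^sub>E i\<in>{1..n}. HH a i) G"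
  define g where "g = e s (int p ^ (lam s - a s))"
  have "a s \<le> lam s" using a s by blast
  then have "lam s - a s < lam s" using as by linarith
  then have lt: "int p ^ (lam s - a s) < M s" by (rule pow_lt)
  have gR: "g \<in> (\<Pi>\<^sub>E i\<in>{1..n}. HH a i)"
    using lt M_pos by (auto simp: g_def e_def HH_def PiE_iff)
  have "tau s t k ` (\<Pi>\<^sub>E i\<in>{1..n}. HH a i) = (\<Pi>\<^sub>E i\<in>{1..n}. HH a i)"
    using ch tau_iso[OF s t st k] unfolding characteristic_subgroup_def by blast
  then have "tau s t k g \<in> (\<Pi>\<^sub>E i\<in>{1..n}. HH a i)" using gR by blast
  then have "int p ^ (lam t - a t) dvd tau s t k g t" using t by (auto simp: HH_def PiE_iff)
  moreover have "tau s t k g t = int p ^ m"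
    using s t st val by (simp add: tau_def g_def e_def)
  ultimately show False using pow_ndvd[OF m] by simp
qed

lemma not_char:
  assumes lm: "\<forall>i\<in>{2..n}. lam (i - 1) \<le> lam i"
    and a: "\<forall>i\<in>{1..n}. a i \<le> lam i"
    and nc: "\<not> canonical n lam a"
  shows "\<not> characteristic_subgroup (\<Pi>\<^sub>E i\<in>{1..n}. HH a i) G"
proof -
  consider (I) i where "i \<in> {2..n}" "a i < a (i - 1)"
    | (II) i where "i \<in> {1..<n}" "int (a (i + 1)) - int (a i) > int (lam (i + 1)) - int (lam i)"
    using nc unfolding canonical_def by force
  then show ?thesis
  proof cases
    case I
    define s where "s = i - 1"
    have s: "s \<in> {1..n}" and t: "i \<in> {1..n}" and st: "s \<noteq> i" using I by (auto simp: s_def)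
    have ls: "lam s \<le> lam i" using lm I by (simp add: s_def)
    have ai: "a i < a s" using I by (simp add: s_def)
    have as_: "a s \<le> lam s" using a s by blast
    define k where "k = int p ^ (lam i - lam s)"
    have kM: "k * M s = M i" using ls by (simp add: k_def flip: power_add)
    have "(k * int p ^ (lam s - a s)) = int p ^ (lam i - a s)"
      using ls as_ by (simp add: k_def flip: power_add)
    moreover have "int p ^ (lam i - a s) < M i" using ai ls as_ by (intro pow_lt) linarith
    ultimately have val: "(k * int p ^ (lam s - a s)) mod M i = int p ^ (lam i - a s)"
      using p_pos by simp
    have d: "M i dvd k * M s" using kM by simp
    have a1: "1 \<le> a s" using ai by linarith
    have m: "lam i - a s < lam i - a i" using ai as_ ls by linarith
    show ?thesis by (rule witness[OF s t st d a a1 val m])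
  next
    case II
    define s where "s = i + 1"
    have s: "s \<in> {1..n}" and t: "i \<in> {1..n}" and st: "s \<noteq> i" using II by (auto simp: s_def)
    have "s \<in> {2..n}" using II by (auto simp: s_def)
    then have ls: "lam i \<le> lam s" using lm by (metis s_def add_diff_cancel_right')
    have as_: "a s \<le> lam s" and ai: "a i \<le> lam i" using a s t by blast+
    have cc: "lam s - a s < lam i - a i" using II as_ ai by (simp add: s_def)
    have "int p ^ (lam s - a s) < M i" using cc by (intro pow_lt) linarith
    then have val: "(1 * int p ^ (lam s - a s)) mod M i = int p ^ (lam s - a s)"
      using p_pos by simp
    have d: "M i dvd 1 * M s" using ls by (simp add: le_imp_power_dvd)
    have a1: "1 \<le> a s" using II as_ ai ls by (simp add: s_def)
    show ?thesis by (rule witness[OF s t st d a a1 val cc])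
  qed
qed

end

theorem mainTheorem3:
  fixes p n :: nat and lam a :: "nat \<Rightarrow> nat"
  assumes "Factorial_Ring.prime p"
    and "\<forall>i\<in>{1..n}. 1 \<le> lam i"
    and "\<forall>i\<in>{2..n}. lam (i - 1) \<le> lam i"
    and "in_Lambda n lam a"
  shows "characteristic_subgroup (Rset p n lam a) (pgrp p n lam) \<longleftrightarrow> canonical n lam a"
proof -
  interpret PG p n lam using assms(1) by unfold_locales
  have a: "\<forall>i\<in>{1..n}. a i \<le> lam i" using assms(4) by (simp add: in_Lambda_def)
  show ?thesis
    unfolding Rset_eq[OF a]
    using char_of_canon[OF assms(3) a] not_char[OF assms(3) a] by blast
qed

end
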